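(* Let $G$ be a finite group, $H\le G$ with $[G:H]=n$, $\pi:H\to A$ a homomorphism into an abelian group $A$, and $t_1,\dots,t_n$ representatives of the right cosets of $H$ in $G$ (so $G=\bigsqcup_i Ht_i$) with $1\in\{t_1,\dots,t_n\}$. Define $f:G\to A$ by $f(ht_i)=\pi(h)$ for $h\in H$. For $x\in G$ and each $i$, let $(i)x$ be the index with $t_ix\in Ht_{(i)x}$. Then: (i) $f^h=f$ for all $h\in H$, so $H\le \mathrm{Stab}_G(f)$; (ii) for all $x\in G$, $$\prod_{i=1}^n \pi\bigl(t_ixt_{(i)x}^{-1}\bigr)=\prod_{i=1}^n f^{t_i}(x)=\bigl(\overline f(x)\bigr)^m,\qquad m=[\mathrm{Stab}_G(f):H],$$ where $\overline f$ is the average function of $f$. In particular the transfer map $x\mapsto\prod_{i=1}^n \pi(t_ixt_{(i)x}^{-1})$ is a homomorphism $G\to A$.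
   Context: For a function $f:G\to A$ and $a\in G$, $f^a(x)=f(a)^{-1}f(ax)$. $\mathrm{Stab}_G(f)=\{a\in G: f^a=f\}$. The average function of $f:G\to A$ ($A$ abelian) is $\overline f(x)=\prod_{j} f^{g_j}(x)$, where $f^{g_1},\dots,f^{g_k}$ are the distinct elements of $\{f^g:g\in G\}$. *)

theory Defs
  imports "HOL-Algebra.Algebra"
begin

definition coset_rep :: "('a, 'm) monoid_scheme \<Rightarrow> 'a set \<Rightarrow> 'a set \<Rightarrow> 'a \<Rightarrow> 'a" where
  "coset_rep G H T y = (THE t. t \<in> T \<and> y \<in> H #>\<^bsub>G\<^esub> t)"

(* f : G \<rightarrow> A with f(h t_i) = \<pi>(h), i.e. f(y) = \<pi>(y t^{-1}) where t is the representative of H y *)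
definition coset_fun :: "('a, 'm) monoid_scheme \<Rightarrow> 'a set \<Rightarrow> 'a set \<Rightarrow> ('a \<Rightarrow> 'b) \<Rightarrow> 'a \<Rightarrow> 'b" where
  "coset_fun G H T \<pi> = (\<lambda>y\<in>carrier G. \<pi> (y \<otimes>\<^bsub>G\<^esub> inv\<^bsub>G\<^esub> (coset_rep G H T y)))"

definition shift_fun :: "('a, 'm) monoid_scheme \<Rightarrow> ('b, 'n) monoid_scheme \<Rightarrow> ('a \<Rightarrow> 'b) \<Rightarrow> 'a \<Rightarrow> 'a \<Rightarrow> 'b" where
  "shift_fun G A f a = (\<lambda>x\<in>carrier G. inv\<^bsub>A\<^esub> (f a) \<otimes>\<^bsub>A\<^esub> f (a \<otimes>\<^bsub>G\<^esub> x))"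

(* Stab_G(f) = {a \<in> G. f^a = f} (functions compared on carrier G; f is given restricted to carrier G) *)
definition Stab_fun :: "('a, 'm) monoid_scheme \<Rightarrow> ('b, 'n) monoid_scheme \<Rightarrow> ('a \<Rightarrow> 'b) \<Rightarrow> 'a set" where
  "Stab_fun G A f = {a \<in> carrier G. shift_fun G A f a = f}"

definition avg_fun :: "('a, 'm) monoid_scheme \<Rightarrow> ('b, 'n) monoid_scheme \<Rightarrow> ('a \<Rightarrow> 'b) \<Rightarrow> 'a \<Rightarrow> 'b" where
  "avg_fun G A f x = finprod A (\<lambda>\<phi>. \<phi> x) ((shift_fun G A f) ` carrier G)"

definition transfer_map :: "('a, 'm) monoid_scheme \<Rightarrow> ('b, 'n) monoid_scheme \<Rightarrow> 'a set \<Rightarrow> 'a set \<Rightarrow> ('a \<Rightarrow> 'b) \<Rightarrow> 'a \<Rightarrow> 'b" where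
  "transfer_map G A H T \<pi> x = finprod A
     (\<lambda>t. \<pi> (t \<otimes>\<^bsub>G\<^esub> x \<otimes>\<^bsub>G\<^esub> inv\<^bsub>G\<^esub> (coset_rep G H T (t \<otimes>\<^bsub>G\<^esub> x)))) T"

end

theory Submission imports Defs begin

locale trsetup = G: group G + A: comm_group A
  for G :: "('a,'m) monoid_scheme" and A :: "('b,'n) monoid_scheme" +
  fixes H T \<pi>
  assumes fin: "finite (carrier G)" and sub: "subgroup H G"
    and hom: "\<pi> \<in> hom (G\<lparr>carrier := H\<rparr>) A"
    and Tsub: "T \<subseteq> carrier G"
    and uniq: "\<forall>x\<in>carrier G. \<exists>!t. t \<in> T \<and> x \<in> H #>\<^bsub>G\<^esub> t"
    and oneT: "\<one>\<^bsub>G\<^esub> \<in> T"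
begin

abbreviation "r \<equiv> coset_rep G H T"
abbreviation "F \<equiv> coset_fun G H T \<pi>"
abbreviation "sh \<equiv> shift_fun G A F"

lemma Hsub: "H \<subseteq> carrier G" using sub subgroup.subset by blast

lemma rep: "y \<in> carrier G \<Longrightarrow> r y \<in> T \<and> y \<in> H #>\<^bsub>G\<^esub> r y"
proof -
  assume y: "y \<in> carrier G"
  have "\<exists>!t. t \<in> T \<and> y \<in> H #>\<^bsub>G\<^esub> t" using uniq y by blast
  then show ?thesis unfolding coset_rep_def by (rule theI')
qed

lemma rep_eq: "t \<in> T \<Longrightarrow> y \<in> H #>\<^bsub>G\<^esub> t \<Longrightarrow> r y = t"
proof -
  assume a: "t \<in> T" "y \<in> H #>\<^bsub>G\<^esub> t"
  then have y: "y \<in> carrier G" using Tsub Hsub G.r_coset_subset_G by blast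
  have "\<exists>!t. t \<in> T \<and> y \<in> H #>\<^bsub>G\<^esub> t" using uniq y by blast
  then show ?thesis unfolding coset_rep_def by (rule the1_equality) (use a in auto)
qed

lemma rcoset_iff: "t \<in> carrier G \<Longrightarrow> y \<in> H #>\<^bsub>G\<^esub> t \<longleftrightarrow> (\<exists>h\<in>H. y = h \<otimes>\<^bsub>G\<^esub> t)"
  unfolding r_coset_def by auto

lemma rep_carrier: "y \<in> carrier G \<Longrightarrow> r y \<in> carrier G" using rep Tsub by blast

lemma rep_decomp: "y \<in> carrier G \<Longrightarrow> y \<otimes>\<^bsub>G\<^esub> inv\<^bsub>G\<^esub> r y \<in> H"
proof -
  assume y: "y \<in> carrier G"
  define \<rho> where "\<rho> = r y"
  have ry: "\<rho> \<in> carrier G" using rep_carrier y \<rho>_def by blast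
  have "y \<in> H #>\<^bsub>G\<^esub> \<rho>" using rep[OF y] \<rho>_def by blast
  then obtain h where h: "h \<in> H" "y = h \<otimes>\<^bsub>G\<^esub> \<rho>" using rcoset_iff[OF ry] by blast
  have hc: "h \<in> carrier G" using h Hsub by blast
  have "y \<otimes>\<^bsub>G\<^esub> inv\<^bsub>G\<^esub> \<rho> = h" using h(2) hc ry by (simp add: G.m_assoc)
  then show ?thesis using h(1) \<rho>_def by simp
qed

lemma rep_T: "t \<in> T \<Longrightarrow> r t = t"
proof -
  assume t: "t \<in> T"
  then have tc: "t \<in> carrier G" using Tsub by blast
  have "\<one>\<^bsub>G\<^esub> \<in> H" using sub subgroup.one_closed by blast
  moreover have "t = \<one>\<^bsub>G\<^esub> \<otimes>\<^bsub>G\<^esub> t" using tc by simp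
  ultimately have "\<exists>hh\<in>H. t = hh \<otimes>\<^bsub>G\<^esub> t" by (rule bexI[rotated])
  then have "t \<in> H #>\<^bsub>G\<^esub> t" using rcoset_iff[OF tc] by (rule iffD2[rotated])
  then show ?thesis using rep_eq t by blast
qed

lemma rep_mult: "h \<in> H \<Longrightarrow> y \<in> carrier G \<Longrightarrow> r (h \<otimes>\<^bsub>G\<^esub> y) = r y"
proof -
  assume h: "h \<in> H" and y: "y \<in> carrier G"
  define \<rho> where "\<rho> = r y"
  have ry: "\<rho> \<in> carrier G" using rep_carrier y \<rho>_def by blast
  have "y \<in> H #>\<^bsub>G\<^esub> \<rho>" using rep[OF y] \<rho>_def by blast
  then obtain k where k: "k \<in> H" "y = k \<otimes>\<^bsub>G\<^esub> \<rho>" using rcoset_iff[OF ry] by blast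
  have hc: "h \<in> carrier G" "k \<in> carrier G" using h k(1) Hsub by auto
  have "h \<otimes>\<^bsub>G\<^esub> y = (h \<otimes>\<^bsub>G\<^esub> k) \<otimes>\<^bsub>G\<^esub> \<rho>" unfolding k(2) using hc ry by (simp add: G.m_assoc)
  moreover have "h \<otimes>\<^bsub>G\<^esub> k \<in> H" by (rule subgroup.m_closed[OF sub h k(1)])
  ultimately have "\<exists>hh\<in>H. h \<otimes>\<^bsub>G\<^esub> y = hh \<otimes>\<^bsub>G\<^esub> \<rho>" by blast
  then have m: "h \<otimes>\<^bsub>G\<^esub> y \<in> H #>\<^bsub>G\<^esub> \<rho>" using rcoset_iff[OF ry] by (rule iffD2[rotated])
  have rT: "\<rho> \<in> T" using rep[OF y] \<rho>_def by blast
  have "r (h \<otimes>\<^bsub>G\<^esub> y) = \<rho>" by (rule rep_eq[OF rT m])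
  then show ?thesis unfolding \<rho>_def .
qed

lemma pi_closed: "h \<in> H \<Longrightarrow> \<pi> h \<in> carrier A"
  using hom unfolding hom_def by auto

lemma pi_mult: "h \<in> H \<Longrightarrow> k \<in> H \<Longrightarrow> \<pi> (h \<otimes>\<^bsub>G\<^esub> k) = \<pi> h \<otimes>\<^bsub>A\<^esub> \<pi> k"
  using hom unfolding hom_def by auto

lemma pi_one: "\<pi> \<one>\<^bsub>G\<^esub> = \<one>\<^bsub>A\<^esub>"
proof -
  have "group (G\<lparr>carrier := H\<rparr>)" using sub G.subgroup_imp_group by blast
  then interpret gh: group_hom "G\<lparr>carrier := H\<rparr>" A \<pi>
    using hom A.group_axioms unfolding group_hom_def group_hom_axioms_def by blast
  show ?thesis using gh.hom_one by simp
qed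

lemma F_val: "y \<in> carrier G \<Longrightarrow> F y = \<pi> (y \<otimes>\<^bsub>G\<^esub> inv\<^bsub>G\<^esub> r y)"
  unfolding coset_fun_def by simp

lemma F_closed: "y \<in> carrier G \<Longrightarrow> F y \<in> carrier A"
  using F_val rep_decomp pi_closed by simp

lemma F_T: "t \<in> T \<Longrightarrow> F t = \<one>\<^bsub>A\<^esub>"
proof -
  assume t: "t \<in> T"
  then have "t \<in> carrier G" using Tsub by blast
  then show ?thesis using F_val[of t] rep_T[OF t] pi_one by simp
qed

lemma F_mult: "h \<in> H \<Longrightarrow> y \<in> carrier G \<Longrightarrow> F (h \<otimes>\<^bsub>G\<^esub> y) = \<pi> h \<otimes>\<^bsub>A\<^esub> F y"
proof -
  assume h: "h \<in> H" and y: "y \<in> carrier G"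
  have hc: "h \<in> carrier G" using h Hsub by blast
  have "F (h \<otimes>\<^bsub>G\<^esub> y) = \<pi> (h \<otimes>\<^bsub>G\<^esub> (y \<otimes>\<^bsub>G\<^esub> inv\<^bsub>G\<^esub> r y))"
    using F_val[of "h \<otimes>\<^bsub>G\<^esub> y"] rep_mult[OF h y] hc y rep_carrier[OF y] by (simp add: G.m_assoc)
  also have "\<dots> = \<pi> h \<otimes>\<^bsub>A\<^esub> F y" using pi_mult h rep_decomp y F_val by simp
  finally show ?thesis .
qed

lemma F_H: "h \<in> H \<Longrightarrow> F h = \<pi> h"
  using F_mult[of h "\<one>\<^bsub>G\<^esub>"] F_T[OF oneT] pi_closed Hsub by auto

lemma sh_val: "x \<in> carrier G \<Longrightarrow> sh a x = inv\<^bsub>A\<^esub> (F a) \<otimes>\<^bsub>A\<^esub> F (a \<otimes>\<^bsub>G\<^esub> x)"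
  unfolding shift_fun_def by simp

lemma sh_out: "x \<notin> carrier G \<Longrightarrow> sh a x = undefined"
  unfolding shift_fun_def by simp

lemma F_out: "x \<notin> carrier G \<Longrightarrow> F x = undefined"
  unfolding coset_fun_def by simp

lemma sh_closed: "a \<in> carrier G \<Longrightarrow> x \<in> carrier G \<Longrightarrow> sh a x \<in> carrier A"
  using sh_val F_closed by simp

lemma sh_H: "h \<in> H \<Longrightarrow> sh h = F"
proof
  fix x assume h: "h \<in> H"
  show "sh h x = F x"
  proof (cases "x \<in> carrier G")
    case True
    then show ?thesis using sh_val F_mult[OF h True] F_H[OF h] pi_closed[OF h] F_closed[OF True]
      by (simp add: A.m_assoc[symmetric])
  qed (simp add: sh_out F_out)
qed

lemma grp_aux: "u \<in> carrier A \<Longrightarrow> v \<in> carrier A \<Longrightarrow> w \<in> carrier A \<Longrightarrow>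
   inv\<^bsub>A\<^esub> (inv\<^bsub>A\<^esub> u \<otimes>\<^bsub>A\<^esub> v) \<otimes>\<^bsub>A\<^esub> (inv\<^bsub>A\<^esub> u \<otimes>\<^bsub>A\<^esub> w) = inv\<^bsub>A\<^esub> v \<otimes>\<^bsub>A\<^esub> w"
  by (simp add: A.inv_mult_group A.m_assoc[symmetric]) (simp add: A.m_assoc)

lemma sh_comp: "a \<in> carrier G \<Longrightarrow> b \<in> carrier G \<Longrightarrow> shift_fun G A (sh a) b = sh (a \<otimes>\<^bsub>G\<^esub> b)"
proof
  fix x assume a: "a \<in> carrier G" and b: "b \<in> carrier G"
  show "shift_fun G A (sh a) b x = sh (a \<otimes>\<^bsub>G\<^esub> b) x"
  proof (cases "x \<in> carrier G")
    case True
    have "shift_fun G A (sh a) b x = inv\<^bsub>A\<^esub> (sh a b) \<otimes>\<^bsub>A\<^esub> sh a (b \<otimes>\<^bsub>G\<^esub> x)"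
      unfolding shift_fun_def[of G A "sh a"] using True by simp
    also have "\<dots> = inv\<^bsub>A\<^esub> (F (a \<otimes>\<^bsub>G\<^esub> b)) \<otimes>\<^bsub>A\<^esub> F (a \<otimes>\<^bsub>G\<^esub> (b \<otimes>\<^bsub>G\<^esub> x))"
      using sh_val b True grp_aux F_closed a by simp
    also have "\<dots> = sh (a \<otimes>\<^bsub>G\<^esub> b) x" using sh_val True a b by (simp add: G.m_assoc)
    finally show ?thesis .
  qed (simp add: shift_fun_def)
qed

lemma sh_one: "sh \<one>\<^bsub>G\<^esub> = F" using sh_H sub subgroup.one_closed by blast

lemma sh_Hmult: "h \<in> H \<Longrightarrow> y \<in> carrier G \<Longrightarrow> sh (h \<otimes>\<^bsub>G\<^esub> y) = sh y"
  using sh_comp[of h y] sh_H Hsub by auto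

lemma sh_rep: "y \<in> carrier G \<Longrightarrow> sh (r y) = sh y"
  using sh_Hmult[of "y \<otimes>\<^bsub>G\<^esub> inv\<^bsub>G\<^esub> r y" "r y"] rep_decomp rep_carrier
  by (simp add: G.m_assoc)


lemma shift_F: "shift_fun G A F b = sh b" by simp

lemma sh_eq_iff: "a \<in> carrier G \<Longrightarrow> b \<in> carrier G \<Longrightarrow> sh a = sh b \<longleftrightarrow> sh (a \<otimes>\<^bsub>G\<^esub> inv\<^bsub>G\<^esub> b) = F"
proof
  assume a: "a \<in> carrier G" and b: "b \<in> carrier G"
  {
    assume e: "sh a = sh b"
    have "sh (a \<otimes>\<^bsub>G\<^esub> inv\<^bsub>G\<^esub> b) = shift_fun G A (sh a) (inv\<^bsub>G\<^esub> b)"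
      using sh_comp[of a "inv\<^bsub>G\<^esub> b"] a b by simp
    also have "\<dots> = shift_fun G A (sh b) (inv\<^bsub>G\<^esub> b)" using e by simp
    also have "\<dots> = sh \<one>\<^bsub>G\<^esub>" using sh_comp[of b "inv\<^bsub>G\<^esub> b"] b by simp
    finally show "sh (a \<otimes>\<^bsub>G\<^esub> inv\<^bsub>G\<^esub> b) = F" using sh_one by simp
  }
  {
    assume e: "sh (a \<otimes>\<^bsub>G\<^esub> inv\<^bsub>G\<^esub> b) = F"
    have "sh a = sh ((a \<otimes>\<^bsub>G\<^esub> inv\<^bsub>G\<^esub> b) \<otimes>\<^bsub>G\<^esub> b)" using a b by (simp add: G.m_assoc)
    also have "\<dots> = shift_fun G A (sh (a \<otimes>\<^bsub>G\<^esub> inv\<^bsub>G\<^esub> b)) b"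
      using sh_comp[of "a \<otimes>\<^bsub>G\<^esub> inv\<^bsub>G\<^esub> b" b] a b by simp
    also have "\<dots> = sh b" using e by simp
    finally show "sh a = sh b" .
  }
qed

abbreviation "S \<equiv> Stab_fun G A F"

lemma S_def': "S = {a \<in> carrier G. sh a = F}" unfolding Stab_fun_def by simp

lemma finT: "finite T" using Tsub fin by (rule finite_subset)
lemma finH: "finite H" using Hsub fin by (rule finite_subset)

lemma card_fiber_S: "b \<in> carrier G \<Longrightarrow> card {y \<in> carrier G. sh y = sh b} = card S"
proof -
  assume b: "b \<in> carrier G"
  have "{y \<in> carrier G. sh y = sh b} = (\<lambda>s. s \<otimes>\<^bsub>G\<^esub> b) ` S"
  proof
    show "{y \<in> carrier G. sh y = sh b} \<subseteq> (\<lambda>s. s \<otimes>\<^bsub>G\<^esub> b) ` S"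
    proof
      fix y assume "y \<in> {y \<in> carrier G. sh y = sh b}"
      then have y: "y \<in> carrier G" and e: "sh y = sh b" by auto
      have "y \<otimes>\<^bsub>G\<^esub> inv\<^bsub>G\<^esub> b \<in> S" using sh_eq_iff[OF y b] e y b S_def' by simp
      moreover have "y = (y \<otimes>\<^bsub>G\<^esub> inv\<^bsub>G\<^esub> b) \<otimes>\<^bsub>G\<^esub> b" using y b by (simp add: G.m_assoc)
      ultimately show "y \<in> (\<lambda>s. s \<otimes>\<^bsub>G\<^esub> b) ` S" by (rule rev_image_eqI)
    qed
    show "(\<lambda>s. s \<otimes>\<^bsub>G\<^esub> b) ` S \<subseteq> {y \<in> carrier G. sh y = sh b}"
    proof
      fix y assume "y \<in> (\<lambda>s. s \<otimes>\<^bsub>G\<^esub> b) ` S"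
      then obtain s where s: "s \<in> S" and ys: "y = s \<otimes>\<^bsub>G\<^esub> b" by blast
      have sc: "s \<in> carrier G" and sF: "sh s = F" using s S_def' by auto
      have "sh (s \<otimes>\<^bsub>G\<^esub> b) = shift_fun G A (sh s) b" using sh_comp[OF sc b] by simp
      also have "\<dots> = sh b" using sF by simp
      finally show "y \<in> {y \<in> carrier G. sh y = sh b}" using ys sc b by simp
    qed
  qed
  moreover have "inj_on (\<lambda>s. s \<otimes>\<^bsub>G\<^esub> b) S"
    by (rule inj_onI) (use b S_def' in auto)
  ultimately show ?thesis by (simp add: card_image)
qed

lemma fiber_union: "b \<in> carrier G \<Longrightarrow>
   {y \<in> carrier G. sh y = sh b} = (\<Union>t\<in>{t \<in> T. sh t = sh b}. H #>\<^bsub>G\<^esub> t)"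
proof
  assume b: "b \<in> carrier G"
  show "{y \<in> carrier G. sh y = sh b} \<subseteq> (\<Union>t\<in>{t \<in> T. sh t = sh b}. H #>\<^bsub>G\<^esub> t)"
  proof
    fix y assume "y \<in> {y \<in> carrier G. sh y = sh b}"
    then have y: "y \<in> carrier G" and e: "sh y = sh b" by auto
    have "r y \<in> {t \<in> T. sh t = sh b}" using rep[OF y] sh_rep[OF y] e by simp
    moreover have "y \<in> H #>\<^bsub>G\<^esub> r y" using rep[OF y] by simp
    ultimately show "y \<in> (\<Union>t\<in>{t \<in> T. sh t = sh b}. H #>\<^bsub>G\<^esub> t)" by blast
  qed
  show "(\<Union>t\<in>{t \<in> T. sh t = sh b}. H #>\<^bsub>G\<^esub> t) \<subseteq> {y \<in> carrier G. sh y = sh b}"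
  proof
    fix y assume "y \<in> (\<Union>t\<in>{t \<in> T. sh t = sh b}. H #>\<^bsub>G\<^esub> t)"
    then obtain t where t: "t \<in> T" "sh t = sh b" and yt: "y \<in> H #>\<^bsub>G\<^esub> t" by blast
    have tc: "t \<in> carrier G" using t Tsub by blast
    obtain h where h: "h \<in> H" and yh: "y = h \<otimes>\<^bsub>G\<^esub> t" using yt rcoset_iff[OF tc] by blast
    have "h \<in> carrier G" using h Hsub by blast
    then have "y \<in> carrier G" using yh tc by simp
    moreover have "sh y = sh b" using sh_Hmult[OF h tc] yh t(2) by simp
    ultimately show "y \<in> {y \<in> carrier G. sh y = sh b}" by simp
  qed
qed

lemma card_S: "b \<in> carrier G \<Longrightarrow> card S = card {t \<in> T. sh t = sh b} * card H"
proof -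
  assume b: "b \<in> carrier G"
  have "card S = card (\<Union>t\<in>{t \<in> T. sh t = sh b}. H #>\<^bsub>G\<^esub> t)"
    using card_fiber_S[OF b] fiber_union[OF b] by simp
  also have "\<dots> = (\<Sum>t\<in>{t \<in> T. sh t = sh b}. card (H #>\<^bsub>G\<^esub> t))"
  proof (rule card_UN_disjoint)
    show "finite {t \<in> T. sh t = sh b}" using finT by simp
    show "\<forall>i\<in>{t \<in> T. sh t = sh b}. finite (H #>\<^bsub>G\<^esub> i)"
    proof
      fix i assume "i \<in> {t \<in> T. sh t = sh b}"
      then have "i \<in> carrier G" using Tsub by blast
      then have "H #>\<^bsub>G\<^esub> i \<subseteq> carrier G" using G.r_coset_subset_G[OF Hsub] by blast
      then show "finite (H #>\<^bsub>G\<^esub> i)" using fin by (rule finite_subset)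
    qed
    show "\<forall>i\<in>{t \<in> T. sh t = sh b}. \<forall>j\<in>{t \<in> T. sh t = sh b}. i \<noteq> j \<longrightarrow> (H #>\<^bsub>G\<^esub> i) \<inter> (H #>\<^bsub>G\<^esub> j) = {}"
    proof (intro ballI impI)
      fix i j assume i: "i \<in> {t \<in> T. sh t = sh b}" and j: "j \<in> {t \<in> T. sh t = sh b}" and ij: "i \<noteq> j"
      show "(H #>\<^bsub>G\<^esub> i) \<inter> (H #>\<^bsub>G\<^esub> j) = {}"
      proof (rule ccontr)
        assume "(H #>\<^bsub>G\<^esub> i) \<inter> (H #>\<^bsub>G\<^esub> j) \<noteq> {}"
        then obtain y where "y \<in> H #>\<^bsub>G\<^esub> i" "y \<in> H #>\<^bsub>G\<^esub> j" by blast
        then have "r y = i" "r y = j" using rep_eq i j by auto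
        then show False using ij by simp
      qed
    qed
  qed
  also have "\<dots> = (\<Sum>t\<in>{t \<in> T. sh t = sh b}. card H)"
  proof (rule sum.cong)
    fix t assume "t \<in> {t \<in> T. sh t = sh b}"
    then have "t \<in> carrier G" using Tsub by blast
    then show "card (H #>\<^bsub>G\<^esub> t) = card H"
      using G.card_rcosets_equal[OF G.rcosetsI[OF Hsub] Hsub] by simp
  qed simp
  finally show ?thesis by simp
qed

lemma cardH_pos: "card H > 0"
proof -
  have "\<one>\<^bsub>G\<^esub> \<in> H" using sub by (rule subgroup.one_closed)
  then show ?thesis using finH card_gt_0_iff by blast
qed

lemma card_Tb: "b \<in> carrier G \<Longrightarrow> card {t \<in> T. sh t = sh b} = card S div card H"
  using card_S cardH_pos by simp

end

lemma (in comm_monoid) finprod_pow_nat: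
  "f \<in> I \<rightarrow> carrier G \<Longrightarrow> finprod G (\<lambda>i. f i [^] (n::nat)) I = finprod G f I [^] n"
proof (induct I rule: infinite_finite_induct)
  case (insert a I)
  then have fa: "f a \<in> carrier G" and fI: "f \<in> I \<rightarrow> carrier G" by auto
  have "finprod G (\<lambda>i. f i [^] n) (insert a I) = f a [^] n \<otimes> finprod G (\<lambda>i. f i [^] n) I"
    using insert fa fI by (intro finprod_insert) auto
  also have "\<dots> = f a [^] n \<otimes> finprod G f I [^] n" using insert fI by simp
  also have "\<dots> = (f a \<otimes> finprod G f I) [^] n" using fa fI by (simp add: nat_pow_distrib)
  also have "\<dots> = finprod G f (insert a I) [^] n" using insert fa fI by (simp add: finprod_insert)
  finally show ?case .
qed auto


context trsetup
begin

lemma sh_T_val: "t \<in> T \<Longrightarrow> x \<in> carrier G \<Longrightarrow>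
   sh t x = \<pi> (t \<otimes>\<^bsub>G\<^esub> x \<otimes>\<^bsub>G\<^esub> inv\<^bsub>G\<^esub> r (t \<otimes>\<^bsub>G\<^esub> x))"
proof -
  assume t: "t \<in> T" and x: "x \<in> carrier G"
  have tc: "t \<in> carrier G" using t Tsub by blast
  have txc: "t \<otimes>\<^bsub>G\<^esub> x \<in> carrier G" using tc x by simp
  have "sh t x = inv\<^bsub>A\<^esub> (F t) \<otimes>\<^bsub>A\<^esub> F (t \<otimes>\<^bsub>G\<^esub> x)" using sh_val[OF x] .
  also have "\<dots> = F (t \<otimes>\<^bsub>G\<^esub> x)" using F_T[OF t] F_closed[OF txc] by simp
  also have "\<dots> = \<pi> (t \<otimes>\<^bsub>G\<^esub> x \<otimes>\<^bsub>G\<^esub> inv\<^bsub>G\<^esub> r (t \<otimes>\<^bsub>G\<^esub> x))" using F_val[OF txc] .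
  finally show ?thesis .
qed

lemma transfer_eq: "x \<in> carrier G \<Longrightarrow> transfer_map G A H T \<pi> x = finprod A (\<lambda>t. sh t x) T"
  unfolding transfer_map_def
proof (rule A.finprod_cong')
  assume x: "x \<in> carrier G"
  have Tc: "\<And>t. t \<in> T \<Longrightarrow> t \<in> carrier G" using Tsub by blast
  show "(\<lambda>t. sh t x) \<in> T \<rightarrow> carrier A" using Tc x sh_closed by blast
  show "\<And>t. t \<in> T \<Longrightarrow> \<pi> (t \<otimes>\<^bsub>G\<^esub> x \<otimes>\<^bsub>G\<^esub> inv\<^bsub>G\<^esub> r (t \<otimes>\<^bsub>G\<^esub> x)) = sh t x"
    using sh_T_val x by simp
qed simp

lemma avg_eq: "x \<in> carrier G \<Longrightarrow>
   finprod A (\<lambda>t. sh t x) T = avg_fun G A F x [^]\<^bsub>A\<^esub> (card S div card H)"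
proof -
  assume x: "x \<in> carrier G"
  define I where "I = sh ` carrier G"
  define fib where "fib = (\<lambda>\<phi>. {t \<in> T. sh t = \<phi>})"
  define m where "m = card S div card H"
  have TU: "T = \<Union> (fib ` I)"
  proof
    show "T \<subseteq> \<Union> (fib ` I)"
    proof
      fix t assume t: "t \<in> T"
      then have "t \<in> carrier G" using Tsub by blast
      then have "sh t \<in> I" unfolding I_def by blast
      moreover have "t \<in> fib (sh t)" using t unfolding fib_def by simp
      ultimately show "t \<in> \<Union> (fib ` I)" by blast
    qed
    show "\<Union> (fib ` I) \<subseteq> T" unfolding fib_def by blast
  qed
  have "finprod A (\<lambda>t. sh t x) T = finprod A (\<lambda>t. sh t x) (\<Union> (fib ` I))" using TU by simp
  also have "\<dots> = finprod A (\<lambda>\<phi>. finprod A (\<lambda>t. sh t x) (fib \<phi>)) I"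
  proof (rule A.finprod_UN_disjoint)
    show "finite I" unfolding I_def using fin by simp
    show "\<And>i. i \<in> I \<Longrightarrow> finite (fib i)" unfolding fib_def using finT by simp
    show "pairwise (\<lambda>i j. disjnt (fib i) (fib j)) I"
      unfolding pairwise_def disjnt_def fib_def by blast
    show "\<And>i t. i \<in> I \<Longrightarrow> t \<in> fib i \<Longrightarrow> sh t x \<in> carrier A"
      unfolding fib_def using x Tsub sh_closed by blast
  qed
  also have "\<dots> = finprod A (\<lambda>\<phi>. \<phi> x [^]\<^bsub>A\<^esub> m) I"
  proof (rule A.finprod_cong')
    show "(\<lambda>\<phi>. \<phi> x [^]\<^bsub>A\<^esub> m) \<in> I \<rightarrow> carrier A"
      unfolding I_def using x sh_closed by auto
  next
    fix \<phi> assume "\<phi> \<in> I"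
    then obtain b where b: "b \<in> carrier G" and \<phi>: "\<phi> = sh b" unfolding I_def by blast
    have "finprod A (\<lambda>t. sh t x) (fib \<phi>) = finprod A (\<lambda>t. \<phi> x) (fib \<phi>)"
      by (rule A.finprod_cong') (auto simp: fib_def \<phi> Pi_def sh_closed[OF b x])
    also have "\<dots> = \<phi> x [^]\<^bsub>A\<^esub> card (fib \<phi>)"
      by (rule A.finprod_const) (simp add: \<phi> sh_closed[OF b x])
    also have "card (fib \<phi>) = m" unfolding fib_def m_def \<phi> using card_Tb[OF b] .
    finally show "finprod A (\<lambda>t. sh t x) (fib \<phi>) = \<phi> x [^]\<^bsub>A\<^esub> m" .
  qed simp
  also have "\<dots> = finprod A (\<lambda>\<phi>. \<phi> x) I [^]\<^bsub>A\<^esub> m"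
    by (rule A.finprod_pow_nat) (auto simp: I_def Pi_def x sh_closed)
  also have "\<dots> = avg_fun G A F x [^]\<^bsub>A\<^esub> (card S div card H)"
    unfolding avg_fun_def I_def m_def ..
  finally show ?thesis .
qed

lemma grp_aux2: "u \<in> carrier A \<Longrightarrow> v \<in> carrier A \<Longrightarrow> w \<in> carrier A \<Longrightarrow>
   (inv\<^bsub>A\<^esub> u \<otimes>\<^bsub>A\<^esub> v) \<otimes>\<^bsub>A\<^esub> (inv\<^bsub>A\<^esub> v \<otimes>\<^bsub>A\<^esub> w) = inv\<^bsub>A\<^esub> u \<otimes>\<^bsub>A\<^esub> w"
proof -
  assume u: "u \<in> carrier A" and v: "v \<in> carrier A" and w: "w \<in> carrier A"
  have "v \<otimes>\<^bsub>A\<^esub> (inv\<^bsub>A\<^esub> v \<otimes>\<^bsub>A\<^esub> w) = w" using v w by (simp add: A.m_assoc[symmetric])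
  then show ?thesis using u v w by (simp add: A.m_assoc)
qed

lemma sh_split: "t \<in> carrier G \<Longrightarrow> x \<in> carrier G \<Longrightarrow> y \<in> carrier G \<Longrightarrow>
   sh t (x \<otimes>\<^bsub>G\<^esub> y) = sh t x \<otimes>\<^bsub>A\<^esub> sh (t \<otimes>\<^bsub>G\<^esub> x) y"
proof -
  assume t: "t \<in> carrier G" and x: "x \<in> carrier G" and y: "y \<in> carrier G"
  have "sh t x \<otimes>\<^bsub>A\<^esub> sh (t \<otimes>\<^bsub>G\<^esub> x) y
      = (inv\<^bsub>A\<^esub> F t \<otimes>\<^bsub>A\<^esub> F (t \<otimes>\<^bsub>G\<^esub> x)) \<otimes>\<^bsub>A\<^esub> (inv\<^bsub>A\<^esub> F (t \<otimes>\<^bsub>G\<^esub> x) \<otimes>\<^bsub>A\<^esub> F (t \<otimes>\<^bsub>G\<^esub> x \<otimes>\<^bsub>G\<^esub> y))"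
    using sh_val x y by simp
  also have "\<dots> = inv\<^bsub>A\<^esub> F t \<otimes>\<^bsub>A\<^esub> F (t \<otimes>\<^bsub>G\<^esub> x \<otimes>\<^bsub>G\<^esub> y)"
    using grp_aux2 F_closed t x y by simp
  also have "\<dots> = sh t (x \<otimes>\<^bsub>G\<^esub> y)" using sh_val t x y by (simp add: G.m_assoc)
  finally show ?thesis by simp
qed

lemma rx_inj: "x \<in> carrier G \<Longrightarrow> inj_on (\<lambda>t. r (t \<otimes>\<^bsub>G\<^esub> x)) T"
proof (rule inj_onI)
  fix t s assume x: "x \<in> carrier G" and t: "t \<in> T" and s: "s \<in> T"
    and e: "r (t \<otimes>\<^bsub>G\<^esub> x) = r (s \<otimes>\<^bsub>G\<^esub> x)"
  have tc: "t \<in> carrier G" and sc: "s \<in> carrier G" using t s Tsub by auto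
  have txc: "t \<otimes>\<^bsub>G\<^esub> x \<in> carrier G" and sxc: "s \<otimes>\<^bsub>G\<^esub> x \<in> carrier G" using tc sc x by auto
  have c1: "H #>\<^bsub>G\<^esub> r (t \<otimes>\<^bsub>G\<^esub> x) = H #>\<^bsub>G\<^esub> (t \<otimes>\<^bsub>G\<^esub> x)"
    using G.repr_independence[OF conjunct2[OF rep[OF txc]] rep_carrier[OF txc] sub] .
  have c2: "H #>\<^bsub>G\<^esub> r (s \<otimes>\<^bsub>G\<^esub> x) = H #>\<^bsub>G\<^esub> (s \<otimes>\<^bsub>G\<^esub> x)"
    using G.repr_independence[OF conjunct2[OF rep[OF sxc]] rep_carrier[OF sxc] sub] .
  have "H #>\<^bsub>G\<^esub> t = (H #>\<^bsub>G\<^esub> (t \<otimes>\<^bsub>G\<^esub> x)) #>\<^bsub>G\<^esub> inv\<^bsub>G\<^esub> x"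
    using G.coset_mult_assoc[OF Hsub txc G.inv_closed[OF x]] tc x by (simp add: G.m_assoc)
  also have "\<dots> = (H #>\<^bsub>G\<^esub> (s \<otimes>\<^bsub>G\<^esub> x)) #>\<^bsub>G\<^esub> inv\<^bsub>G\<^esub> x" using c1 c2 e by simp
  also have "\<dots> = H #>\<^bsub>G\<^esub> s"
    using G.coset_mult_assoc[OF Hsub sxc G.inv_closed[OF x]] sc x by (simp add: G.m_assoc)
  finally have "t \<in> H #>\<^bsub>G\<^esub> s" using G.rcos_self[OF tc sub] by simp
  then have "r t = s" using rep_eq s by blast
  then show "t = s" using rep_T[OF t] by simp
qed

lemma rx_image: "x \<in> carrier G \<Longrightarrow> (\<lambda>t. r (t \<otimes>\<^bsub>G\<^esub> x)) ` T = T"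
proof (rule endo_inj_surj[OF finT])
  assume x: "x \<in> carrier G"
  show "(\<lambda>t. r (t \<otimes>\<^bsub>G\<^esub> x)) ` T \<subseteq> T"
  proof
    fix u assume "u \<in> (\<lambda>t. r (t \<otimes>\<^bsub>G\<^esub> x)) ` T"
    then obtain t where t: "t \<in> T" and u: "u = r (t \<otimes>\<^bsub>G\<^esub> x)" by blast
    have "t \<otimes>\<^bsub>G\<^esub> x \<in> carrier G" using t Tsub x by auto
    then show "u \<in> T" using rep u by blast
  qed
  show "inj_on (\<lambda>t. r (t \<otimes>\<^bsub>G\<^esub> x)) T" using rx_inj[OF x] .
qed

lemma V_mult: "x \<in> carrier G \<Longrightarrow> y \<in> carrier G \<Longrightarrow>
  finprod A (\<lambda>t. sh t (x \<otimes>\<^bsub>G\<^esub> y)) T = finprod A (\<lambda>t. sh t x) T \<otimes>\<^bsub>A\<^esub> finprod A (\<lambda>t. sh t y) T"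
proof -
  assume x: "x \<in> carrier G" and y: "y \<in> carrier G"
  have Tc: "\<And>t. t \<in> T \<Longrightarrow> t \<in> carrier G" using Tsub by blast
  have "finprod A (\<lambda>t. sh t (x \<otimes>\<^bsub>G\<^esub> y)) T = finprod A (\<lambda>t. sh t x \<otimes>\<^bsub>A\<^esub> sh (t \<otimes>\<^bsub>G\<^esub> x) y) T"
    by (rule A.finprod_cong') (auto simp: Pi_def sh_split x y Tc sh_closed)
  also have "\<dots> = finprod A (\<lambda>t. sh t x) T \<otimes>\<^bsub>A\<^esub> finprod A (\<lambda>t. sh (t \<otimes>\<^bsub>G\<^esub> x) y) T"
    by (rule A.finprod_multf) (auto simp: Pi_def x y Tc sh_closed)
  also have "finprod A (\<lambda>t. sh (t \<otimes>\<^bsub>G\<^esub> x) y) T = finprod A (\<lambda>t. sh (r (t \<otimes>\<^bsub>G\<^esub> x)) y) T"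
    by (rule A.finprod_cong') (auto simp: Pi_def x y Tc sh_closed sh_rep rep_carrier)
  also have "\<dots> = finprod A (\<lambda>u. sh u y) ((\<lambda>t. r (t \<otimes>\<^bsub>G\<^esub> x)) ` T)"
    by (rule A.finprod_reindex[symmetric]) (auto simp: Pi_def y sh_closed rep_carrier x Tc rx_inj)
  also have "\<dots> = finprod A (\<lambda>u. sh u y) T" using rx_image[OF x] by simp
  finally show ?thesis .
qed

lemma transfer_hom: "transfer_map G A H T \<pi> \<in> hom G A"
proof -
  have Tc: "\<And>t. t \<in> T \<Longrightarrow> t \<in> carrier G" using Tsub by blast
  have cl: "\<And>x. x \<in> carrier G \<Longrightarrow> transfer_map G A H T \<pi> x \<in> carrier A"
    using transfer_eq by (auto intro!: A.finprod_closed simp: Pi_def Tc sh_closed)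
  show ?thesis unfolding hom_def
    using cl transfer_eq V_mult by (auto simp: Pi_def)
qed

end

theorem mainTheorem6:
  fixes G :: "('a, 'm) monoid_scheme" and A :: "('b, 'n) monoid_scheme"
  assumes "group G" and "finite (carrier G)"
    and "subgroup H G"
    and "comm_group A"
    and "\<pi> \<in> hom (G\<lparr>carrier := H\<rparr>) A"
    and "T \<subseteq> carrier G"
    and "\<forall>x\<in>carrier G. \<exists>!t. t \<in> T \<and> x \<in> H #>\<^bsub>G\<^esub> t"
    and "\<one>\<^bsub>G\<^esub> \<in> T"
  shows "(\<forall>h\<in>H. shift_fun G A (coset_fun G H T \<pi>) h = coset_fun G H T \<pi>)
     \<and> H \<subseteq> Stab_fun G A (coset_fun G H T \<pi>)
     \<and> (\<forall>x\<in>carrier G.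
          transfer_map G A H T \<pi> x
            = finprod A (\<lambda>t. shift_fun G A (coset_fun G H T \<pi>) t x) T
        \<and> finprod A (\<lambda>t. shift_fun G A (coset_fun G H T \<pi>) t x) T
            = avg_fun G A (coset_fun G H T \<pi>) x
                [^]\<^bsub>A\<^esub> (card (Stab_fun G A (coset_fun G H T \<pi>)) div card H))
     \<and> transfer_map G A H T \<pi> \<in> hom G A"
proof -
  interpret trsetup G A H T \<pi>
    using assms unfolding trsetup_def trsetup_axioms_def by blast
  have i: "\<forall>h\<in>H. sh h = F" using sh_H by blast
  have ii: "H \<subseteq> S" using sh_H Hsub unfolding Stab_fun_def by blast
  show ?thesis using i ii transfer_eq avg_eq transfer_hom by blast
qed

end
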